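(* Let $\ell$ be even and let $G$ be an $(n,\ell)$-extremal graph of even order $n$ such that the maximum degree of $\overline{G}$ is at most $2$. Then each connected component of $\overline{G}$ is isomorphic to either $P_2$ or $P_4$.
   Context: All graphs are finite and simple; $\overline{G}$ is the complement of $G$; $P_k$ is the path on $k$ vertices. Vertex labels lie in $\mathbb{Z}_\ell$ ($\ell\ge2$). In the neighborhood Lights Out game on $G$, toggling a vertex $v$ adds $1$ (mod $\ell$) to the label of each vertex of the closed neighborhood $N[v]$; the game is won when all labels are $0$. $G$ is $N$-AW if the game can be won from every initial labeling. $\max(n,\ell)$ is the maximum number of edges of an $N$-AW graph on $n$ vertices, and an $(n,\ell)$-extremal graph is an $N$-AW graph on $n$ vertices with $\max(n,\ell)$ edges. *)

theory Defs
  imports Main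
begin

definition simple_graph :: "'a set \<Rightarrow> ('a \<Rightarrow> 'a \<Rightarrow> bool) \<Rightarrow> bool" where
  "simple_graph V E \<longleftrightarrow> finite V \<and>
     (\<forall>u v. E u v \<longrightarrow> u \<in> V \<and> v \<in> V) \<and>
     (\<forall>u v. E u v \<longrightarrow> E v u) \<and> (\<forall>v. \<not> E v v)"

definition num_edges :: "'a set \<Rightarrow> ('a \<Rightarrow> 'a \<Rightarrow> bool) \<Rightarrow> nat" where
  "num_edges V E = card {{u, v} | u v. u \<in> V \<and> v \<in> V \<and> E u v}"

definition compl_graph :: "'a set \<Rightarrow> ('a \<Rightarrow> 'a \<Rightarrow> bool) \<Rightarrow> 'a \<Rightarrow> 'a \<Rightarrow> bool" where
  "compl_graph V E u v \<longleftrightarrow> u \<in> V \<and> v \<in> V \<and> u \<noteq> v \<and> \<not> E u v"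

definition degree :: "'a set \<Rightarrow> ('a \<Rightarrow> 'a \<Rightarrow> bool) \<Rightarrow> 'a \<Rightarrow> nat" where
  "degree V E v = card {u \<in> V. E v u}"

text \<open>Neighborhood Lights Out over Z_l: toggling v (t v times) adds t v to every label
  in the closed neighborhood N[v].\<close>
definition N_AW :: "'a set \<Rightarrow> ('a \<Rightarrow> 'a \<Rightarrow> bool) \<Rightarrow> nat \<Rightarrow> bool" where
  "N_AW V E l \<longleftrightarrow> (\<forall>f :: 'a \<Rightarrow> int. \<exists>t :: 'a \<Rightarrow> nat. \<forall>u \<in> V.
      (f u + (\<Sum>v \<in> {v \<in> V. v = u \<or> E u v}. int (t v))) mod int l = 0)"

text \<open>max(n,l): maximum number of edges of an N-AW graph on n vertices
  (vertex set {0..<n} without loss of generality).\<close>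
definition max_NAW :: "nat \<Rightarrow> nat \<Rightarrow> nat" where
  "max_NAW n l = Max {num_edges {0..<n} E | E. simple_graph {0..<n} E \<and> N_AW {0..<n} E l}"

definition extremal :: "nat \<Rightarrow> nat \<Rightarrow> 'a set \<Rightarrow> ('a \<Rightarrow> 'a \<Rightarrow> bool) \<Rightarrow> bool" where
  "extremal n l V E \<longleftrightarrow> simple_graph V E \<and> card V = n \<and> N_AW V E l \<and>
     num_edges V E = max_NAW n l"

definition component :: "'a set \<Rightarrow> ('a \<Rightarrow> 'a \<Rightarrow> bool) \<Rightarrow> 'a \<Rightarrow> 'a set" where
  "component V E v = {u \<in> V. E\<^sup>*\<^sup>* v u}"

definition iso_path :: "('a \<Rightarrow> 'a \<Rightarrow> bool) \<Rightarrow> 'a set \<Rightarrow> nat \<Rightarrow> bool" where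
  "iso_path E C k \<longleftrightarrow> (\<exists>f. bij_betw f {0..<k} C \<and>
     (\<forall>i<k. \<forall>j<k. E (f i) (f j) \<longleftrightarrow> (i + 1 = j \<or> j + 1 = i)))"

end

theory Submission
  imports Defs "HOL-Library.FuncSet"
begin


definition cn :: "'a set \<Rightarrow> ('a \<Rightarrow> 'a \<Rightarrow> bool) \<Rightarrow> 'a \<Rightarrow> 'a set" where
  "cn V E w = {v \<in> V. v = w \<or> E w v}"

definition nh :: "'a set \<Rightarrow> ('a \<Rightarrow> 'a \<Rightarrow> bool) \<Rightarrow> 'a \<Rightarrow> 'a set" where
  "nh V E w = {u \<in> V. compl_graph V E w u}"

lemma cn_eq: "simple_graph V E \<Longrightarrow> w \<in> V \<Longrightarrow> cn V E w = V - nh V E w"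
  unfolding cn_def nh_def compl_graph_def simple_graph_def by auto

lemma nh_sub: "nh V E w \<subseteq> V" unfolding nh_def by auto

lemma nh_sym: "simple_graph V E \<Longrightarrow> u \<in> nh V E w \<longleftrightarrow> w \<in> nh V E u"
  unfolding nh_def compl_graph_def simple_graph_def by auto

lemma cn_sym: "simple_graph V E \<Longrightarrow> u \<in> V \<Longrightarrow> w \<in> V \<Longrightarrow> u \<in> cn V E w \<longleftrightarrow> w \<in> cn V E u"
  unfolding cn_def simple_graph_def by auto

lemma sum_cn: "simple_graph V E \<Longrightarrow> w \<in> V \<Longrightarrow>
   (\<Sum>v\<in>cn V E w. x v) = (\<Sum>v\<in>V. x v) - (\<Sum>v\<in>nh V E w. (x v :: int))"
  apply (simp add: cn_eq)
  apply (subst sum_diff)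
  using nh_sub[of V E w] by (auto simp: simple_graph_def intro: finite_subset)

lemma kernel_not_NAW:
  fixes x :: "'a \<Rightarrow> int"
  assumes sg: "simple_graph V E" and ker: "\<forall>w\<in>V. int l dvd (\<Sum>v\<in>cn V E w. x v)"
    and u0: "u0 \<in> V" and nd: "\<not> int l dvd x u0"
  shows "\<not> N_AW V E l"
proof
  assume "N_AW V E l"
  then obtain t :: "'a \<Rightarrow> nat" where t: "\<forall>u\<in>V. ((if u = u0 then 1 else 0) + (\<Sum>v\<in>cn V E u. int (t v))) mod int l = 0"
    using \<open>N_AW V E l\<close> unfolding N_AW_def cn_def
    by (drule_tac x="\<lambda>u. if u = u0 then 1 else 0" in spec) blast
  have fin: "finite V" using sg simple_graph_def by auto
  have cnV: "cn V E u \<subseteq> V" for u unfolding cn_def by auto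
  have d1: "int l dvd (\<Sum>u\<in>V. x u * ((if u = u0 then 1 else 0) + (\<Sum>v\<in>cn V E u. int (t v))))"
    by (rule dvd_sum) (use t in auto)
  have e1: "(\<Sum>u\<in>V. x u * ((if u = u0 then 1 else 0) + (\<Sum>v\<in>cn V E u. int (t v)))) =
     x u0 + (\<Sum>u\<in>V. \<Sum>v\<in>cn V E u. x u * int (t v))"
  proof -
    have "(\<Sum>u\<in>V. x u * ((if u = u0 then 1 else 0) + (\<Sum>v\<in>cn V E u. int (t v)))) =
      (\<Sum>u\<in>V. x u * (if u = u0 then 1 else 0)) + (\<Sum>u\<in>V. x u * (\<Sum>v\<in>cn V E u. int (t v)))"
      by (simp add: distrib_left sum.distrib)
    also have "(\<Sum>u\<in>V. x u * (if u = u0 then 1 else 0)) = x u0"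
      using u0 fin by (simp add: if_distrib[of "\<lambda>z. x _ * z"] sum.delta cong: if_cong)
    also have "(\<Sum>u\<in>V. x u * (\<Sum>v\<in>cn V E u. int (t v))) = (\<Sum>u\<in>V. \<Sum>v\<in>cn V E u. x u * int (t v))"
      by (simp add: sum_distrib_left)
    finally show ?thesis .
  qed
  have "(\<Sum>u\<in>V. \<Sum>v\<in>cn V E u. x u * int (t v)) = (\<Sum>u\<in>V. \<Sum>v\<in>V. if v \<in> cn V E u then x u * int (t v) else 0)"
    apply (rule sum.cong, simp)
    apply (subst sum.inter_filter[symmetric], simp add: fin)
    by (rule sum.cong) (use cnV in auto)
  also have "\<dots> = (\<Sum>v\<in>V. \<Sum>u\<in>V. if v \<in> cn V E u then x u * int (t v) else 0)"
    by (rule sum.swap)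
  also have "\<dots> = (\<Sum>v\<in>V. int (t v) * (\<Sum>u\<in>cn V E v. x u))"
    apply (rule sum.cong, simp)
    apply (subst sum_distrib_left)
    apply (subst sum.inter_filter[symmetric], simp add: fin)
    apply (rule sum.cong) using cnV cn_sym[OF sg] by auto
  finally have e2: "(\<Sum>u\<in>V. \<Sum>v\<in>cn V E u. x u * int (t v)) = (\<Sum>v\<in>V. int (t v) * (\<Sum>u\<in>cn V E v. x u))" .
  have d2: "int l dvd (\<Sum>v\<in>V. int (t v) * (\<Sum>u\<in>cn V E v. x u))"
    by (rule dvd_sum) (use ker in auto)
  from d1 e1 e2 d2 have "int l dvd x u0" by (metis dvd_add_left_iff)
  with nd show False by blast
qed

lemma not_NAW_kernel:
  assumes fin: "finite V" and l: "l > 0" and nn: "\<not> N_AW V E l"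
  shows "\<exists>x::'a\<Rightarrow>int. \<exists>u0\<in>V. \<not> int l dvd x u0 \<and> (\<forall>w\<in>V. int l dvd (\<Sum>v\<in>cn V E w. x v))"
proof -
  define A where "A = PiE V (\<lambda>_. {0..<int l})"
  define \<phi> where "\<phi> = (\<lambda>t. \<lambda>u\<in>V. (\<Sum>v\<in>cn V E u. t v) mod int l)"
  have finA: "finite A" unfolding A_def by (rule finite_PiE) (auto simp: fin)
  have cnV: "cn V E u \<subseteq> V" for u unfolding cn_def by auto
  have img: "\<phi> ` A \<subseteq> A"
  proof (rule image_subsetI)
    fix t assume "t \<in> A"
    show "\<phi> t \<in> A" unfolding A_def \<phi>_def
      by (rule restrict_PiE_iff[THEN iffD2]) (use l in simp)
  qed
  have "\<not> inj_on \<phi> A"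
  proof
    assume inj: "inj_on \<phi> A"
    have surj: "\<phi> ` A = A" by (rule endo_inj_surj[OF finA img inj])
    have "N_AW V E l"
      unfolding N_AW_def
    proof
      fix f :: "'a \<Rightarrow> int"
      define g where "g = (\<lambda>u\<in>V. (- f u) mod int l)"
      have "g \<in> A" unfolding g_def A_def
        by (rule restrict_PiE_iff[THEN iffD2]) (use l in simp)
      then have "g \<in> \<phi> ` A" using surj by simp
      then obtain t where tg0: "g = \<phi> t" and tA: "t \<in> A" by (rule imageE)
      have tg: "\<phi> t = g" using tg0 by simp
      have tpos: "\<forall>v\<in>V. t v \<ge> 0" using tA unfolding A_def by (metis PiE_mem atLeastLessThan_iff)
      show "\<exists>t' :: 'a \<Rightarrow> nat. \<forall>u\<in>V. (f u + (\<Sum>v\<in>{v \<in> V. v = u \<or> E u v}. int (t' v))) mod int l = 0"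
      proof (intro exI ballI)
        fix u assume u: "u \<in> V"
        have s: "(\<Sum>v\<in>{v \<in> V. v = u \<or> E u v}. int (nat (t v))) = (\<Sum>v\<in>cn V E u. t v)"
          unfolding cn_def by (rule sum.cong) (use tpos in auto)
        have m: "(\<Sum>v\<in>cn V E u. t v) mod int l = (- f u) mod int l"
          using fun_cong[OF tg, of u] u unfolding \<phi>_def g_def by simp
        show "(f u + (\<Sum>v\<in>{v \<in> V. v = u \<or> E u v}. int (nat (t v)))) mod int l = 0"
          unfolding s by (metis m add.right_inverse mod_add_right_eq mod_0)
      qed
    qed
    with nn show False by blast
  qed
  then obtain t1 t2 where t1: "t1 \<in> A" and t2: "t2 \<in> A" and ne: "t1 \<noteq> t2" and eq: "\<phi> t1 = \<phi> t2"
    unfolding inj_on_def by blast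
  obtain u0 where u0ne: "t1 u0 \<noteq> t2 u0" using ne by blast
  have u0: "u0 \<in> V" using u0ne t1 t2 unfolding A_def by (metis PiE_arb)
  define x where "x = (\<lambda>v. t1 v - t2 v)"
  have b1: "0 \<le> t1 u0" "t1 u0 < int l" "0 \<le> t2 u0" "t2 u0 < int l"
    using t1 t2 u0 unfolding A_def by (metis PiE_mem atLeastLessThan_iff)+
  have nd: "\<not> int l dvd x u0"
  proof
    assume "int l dvd x u0"
    then obtain k where k: "x u0 = int l * k" by blast
    have xd: "x u0 = t1 u0 - t2 u0" by (simp add: x_def)
    have "- int l < int l * k" "int l * k < int l" using b1 k xd by linarith+
    then have "k = 0"
    proof -
      assume a: "- int l < int l * k" "int l * k < int l"
      have "\<not> k \<ge> 1"
      proof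
        assume "k \<ge> 1" then have "int l * 1 \<le> int l * k" using l by (intro mult_left_mono) auto
        with a show False by simp
      qed
      moreover have "\<not> k \<le> -1"
      proof
        assume "k \<le> -1" then have "int l * k \<le> int l * (-1)" using l by (intro mult_left_mono) auto
        with a show False by simp
      qed
      ultimately show "k = 0" by simp
    qed
    with k u0ne show False unfolding x_def by simp
  qed
  have ker: "\<forall>w\<in>V. int l dvd (\<Sum>v\<in>cn V E w. x v)"
  proof
    fix w assume w: "w \<in> V"
    have "(\<Sum>v\<in>cn V E w. t1 v) mod int l = (\<Sum>v\<in>cn V E w. t2 v) mod int l"
      using fun_cong[OF eq, of w] w unfolding \<phi>_def by simp
    then show "int l dvd (\<Sum>v\<in>cn V E w. x v)"
      unfolding x_def sum_subtractf by (simp add: mod_eq_dvd_iff)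
  qed
  show ?thesis using nd ker u0 by blast
qed



lemma sum_shift:
  fixes x :: "'a \<Rightarrow> int"
  assumes "finite B"
  shows "(\<Sum>v\<in>B. x v + (if v = a then c else 0) - (if v = b then c else 0)) =
     (\<Sum>v\<in>B. x v) + (if a \<in> B then c else 0) - (if b \<in> B then c else 0)"
  using assms by (simp add: sum.distrib sum_subtractf sum.delta)

lemma config_NAW:
  assumes sg: "simple_graph V E" and l: "l > 0"
    and pV: "p1 \<in> V" "p2 \<in> V" "p3 \<in> V" "p4 \<in> V" "p5 \<in> V"
    and dist: "distinct [p1,p2,p3,p4,p5]"
    and h1: "nh V E p1 = {p2}" and h2: "nh V E p2 = {p1,p3}" and h3: "nh V E p3 = {p2,p4}"
    and h4: "nh V E p4 = {p3,p5}"
    and naw: "N_AW V E l"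
  shows "N_AW V (\<lambda>u v. E u v \<or> (u = p4 \<and> v = p5) \<or> (u = p5 \<and> v = p4)) l"
proof (rule ccontr)
  define E' where "E' = (\<lambda>u v. E u v \<or> (u = p4 \<and> v = p5) \<or> (u = p5 \<and> v = p4))"
  assume "\<not> N_AW V (\<lambda>u v. E u v \<or> (u = p4 \<and> v = p5) \<or> (u = p5 \<and> v = p4)) l"
  then have nn: "\<not> N_AW V E' l" unfolding E'_def .
  have fin: "finite V" using sg simple_graph_def by auto
  obtain x' :: "'a \<Rightarrow> int" and u0 where u0: "u0 \<in> V" and nd: "\<not> int l dvd x' u0"
    and ker: "\<forall>w\<in>V. int l dvd (\<Sum>v\<in>cn V E' w. x' v)"
    using not_NAW_kernel[OF fin l nn] by blast
  have nE45: "\<not> E p4 p5" "\<not> E p5 p4" using h4 nh_sym[OF sg, of p4 p5]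
    unfolding nh_def compl_graph_def by auto
  have co: "cn V E' w = cn V E w" if "w \<noteq> p4" "w \<noteq> p5" for w
    using that unfolding cn_def E'_def by auto
  have c4: "cn V E' p4 = insert p5 (cn V E p4)" and n4: "p5 \<notin> cn V E p4"
    using pV dist nE45 unfolding cn_def E'_def by auto
  have c5: "cn V E' p5 = insert p4 (cn V E p5)" and n5: "p4 \<notin> cn V E p5"
    using pV dist nE45 unfolding cn_def E'_def by auto
  have fcn: "finite (cn V E w)" for w using fin unfolding cn_def by auto
  define S where "S = (\<Sum>v\<in>V. x' v)"
  have K: "int l dvd (\<Sum>v\<in>cn V E w. x' v)" if "w \<in> V" "w \<noteq> p4" "w \<noteq> p5" for w
    using ker that co by metis
  have K4: "int l dvd (\<Sum>v\<in>cn V E p4. x' v) + x' p5"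
    using ker pV c4 n4 fcn by (metis add.commute sum.insert)
  have K5: "int l dvd (\<Sum>v\<in>cn V E p5. x' v) + x' p4"
    using ker pV c5 n5 fcn by (metis add.commute sum.insert)
  have k1: "int l dvd S - x' p2" using K[of p1] pV dist sum_cn[OF sg, of p1 x'] h1 unfolding S_def by auto
  have k2: "int l dvd S - (x' p1 + x' p3)" using K[of p2] pV dist sum_cn[OF sg, of p2 x'] h2 unfolding S_def by auto
  have k3: "int l dvd S - (x' p2 + x' p4)" using K[of p3] pV dist sum_cn[OF sg, of p3 x'] h3 unfolding S_def by auto
  have k4: "int l dvd S - (x' p3 + x' p5) + x' p5" using K4 pV dist sum_cn[OF sg, of p4 x'] h4 unfolding S_def by auto
  have x4: "int l dvd x' p4" using dvd_diff[OF k1 k3] by (simp add: algebra_simps)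
  have x1: "int l dvd x' p1" using dvd_diff[OF k4 k2] by (simp add: algebra_simps)
  have x32: "int l dvd x' p3 - x' p2" using dvd_diff[OF k1 k4] by (simp add: algebra_simps)
  define x where "x = (\<lambda>v. x' v + (if v = p1 then x' p5 else 0) - (if v = p3 then x' p5 else 0))"
  have mem1: "p1 \<in> cn V E w \<longleftrightarrow> w \<noteq> p2" if "w \<in> V" for w
    using that pV h1 nh_sym[OF sg, of p1 w] cn_eq[OF sg that] by auto
  have mem3: "p3 \<in> cn V E w \<longleftrightarrow> w \<noteq> p2 \<and> w \<noteq> p4" if "w \<in> V" for w
    using that pV h3 nh_sym[OF sg, of p3 w] cn_eq[OF sg that] by auto
  have sx: "(\<Sum>v\<in>cn V E w. x v) = (\<Sum>v\<in>cn V E w. x' v) + (if p1 \<in> cn V E w then x' p5 else 0)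
       - (if p3 \<in> cn V E w then x' p5 else 0)" for w
    unfolding x_def by (rule sum_shift[OF fcn])
  have kerx: "\<forall>w\<in>V. int l dvd (\<Sum>v\<in>cn V E w. x v)"
  proof
    fix w assume w: "w \<in> V"
    show "int l dvd (\<Sum>v\<in>cn V E w. x v)"
    proof (cases "w = p2")
      case True then show ?thesis using sx[of w] mem1[OF w] mem3[OF w] K[OF w] dist by auto
    next
      case n2: False
      show ?thesis
      proof (cases "w = p4")
        case True then show ?thesis using sx[of w] mem1[OF w] mem3[OF w] K4 dist by auto
      next
        case n4: False
        show ?thesis
        proof (cases "w = p5")
          case True
          then have "(\<Sum>v\<in>cn V E w. x v) = ((\<Sum>v\<in>cn V E p5. x' v) + x' p4) - x' p4"
            using sx[of w] mem1[OF w] mem3[OF w] n2 n4 by auto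
          then show ?thesis using K5 x4 by (metis dvd_diff)
        next
          case False then show ?thesis using sx[of w] mem1[OF w] mem3[OF w] K[OF w] n2 n4 by auto
        qed
      qed
    qed
  qed
  have "\<exists>u\<in>V. \<not> int l dvd x u"
  proof (cases "u0 = p1 \<or> u0 = p3")
    case True
    then show ?thesis
    proof
      assume "u0 = p1" then show ?thesis using nd x1 by simp
    next
      assume a: "u0 = p3"
      have "\<not> int l dvd x' p2" using nd a x32 by (metis dvd_add_right_iff diff_add_cancel)
      moreover have "x p2 = x' p2" using dist unfolding x_def by auto
      ultimately show ?thesis using pV by metis
    qed
  next
    case False
    then have "x u0 = x' u0" unfolding x_def by auto
    then show ?thesis using nd u0 by metis
  qed
  then obtain u where "u \<in> V" "\<not> int l dvd x u" by blast
  from kernel_not_NAW[OF sg kerx this] naw show False by blast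
qed



lemma edges_sub: "{{u, v} | u v. u \<in> V \<and> v \<in> V \<and> E u v} \<subseteq> Pow V" by auto

lemma num_edges_le: "finite V \<Longrightarrow> num_edges V E \<le> 2 ^ card V"
proof -
  assume fin: "finite V"
  have "card {{u, v} | u v. u \<in> V \<and> v \<in> V \<and> E u v} \<le> card (Pow V)"
    by (rule card_mono) (use fin edges_sub in auto)
  then show ?thesis unfolding num_edges_def card_Pow[OF fin] .
qed

lemma le_max_NAW:
  assumes sg: "simple_graph V E" and cV: "card V = n" and naw: "N_AW V E l"
  shows "num_edges V E \<le> max_NAW n l"
proof -
  have fin: "finite V" using sg simple_graph_def by auto
  obtain h where h: "bij_betw h {0..<n} V" using ex_bij_betw_nat_finite[OF fin] cV by auto
  define W where "W = {0..<n}"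
  define E0 where "E0 = (\<lambda>i j. i \<in> W \<and> j \<in> W \<and> E (h i) (h j))"
  have hinj: "inj_on h W" and himg: "h ` W = V" using h unfolding bij_betw_def W_def by auto
  have sg0: "simple_graph W E0"
    using sg unfolding simple_graph_def E0_def W_def by auto
  have naw0: "N_AW W E0 l"
    unfolding N_AW_def
  proof
    fix f0 :: "nat \<Rightarrow> int"
    define g where "g = inv_into W h"
    obtain t :: "'a \<Rightarrow> nat" where t: "\<forall>u\<in>V. ((f0 \<circ> g) u + (\<Sum>v\<in>{v \<in> V. v = u \<or> E u v}. int (t v))) mod int l = 0"
      using naw unfolding N_AW_def by blast
    show "\<exists>t0 :: nat \<Rightarrow> nat. \<forall>i\<in>W. (f0 i + (\<Sum>j\<in>{j \<in> W. j = i \<or> E0 i j}. int (t0 j))) mod int l = 0"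
    proof (intro exI ballI)
      fix i assume i: "i \<in> W"
      have gi: "g (h i) = i" unfolding g_def using hinj i by (simp add: inv_into_f_f)
      have im: "h ` {j \<in> W. j = i \<or> E0 i j} = {v \<in> V. v = h i \<or> E (h i) v}"
      proof
        show "h ` {j \<in> W. j = i \<or> E0 i j} \<subseteq> {v \<in> V. v = h i \<or> E (h i) v}"
          using himg unfolding E0_def by auto
      next
        show "{v \<in> V. v = h i \<or> E (h i) v} \<subseteq> h ` {j \<in> W. j = i \<or> E0 i j}"
        proof
          fix v assume v: "v \<in> {v \<in> V. v = h i \<or> E (h i) v}"
          then obtain j where j: "j \<in> W" "v = h j" using himg by blast
          then show "v \<in> h ` {j \<in> W. j = i \<or> E0 i j}" using v i unfolding E0_def by auto
        qed
      qed
      have "(\<Sum>j\<in>{j \<in> W. j = i \<or> E0 i j}. int ((t \<circ> h) j)) = (\<Sum>v\<in>{v \<in> V. v = h i \<or> E (h i) v}. int (t v))"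
      proof -
        have sub: "{j \<in> W. j = i \<or> E0 i j} \<subseteq> W" by auto
        show ?thesis unfolding im[symmetric]
          using sum.reindex[OF inj_on_subset[OF hinj sub], of "\<lambda>v. int (t v)"] by (simp add: comp_def)
      qed
      then show "(f0 i + (\<Sum>j\<in>{j \<in> W. j = i \<or> E0 i j}. int ((t \<circ> h) j))) mod int l = 0"
        using t[rule_format, of "h i"] gi i himg by auto
    qed
  qed
  have ed: "{{u, v} | u v. u \<in> V \<and> v \<in> V \<and> E u v} = image h ` {{u, v} | u v. u \<in> W \<and> v \<in> W \<and> E0 u v}"
  proof
    show "{{u, v} | u v. u \<in> V \<and> v \<in> V \<and> E u v} \<subseteq> image h ` {{u, v} | u v. u \<in> W \<and> v \<in> W \<and> E0 u v}"
    proof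
      fix e assume "e \<in> {{u, v} | u v. u \<in> V \<and> v \<in> V \<and> E u v}"
      then obtain u v where e: "e = {u,v}" "u \<in> V" "v \<in> V" "E u v" by blast
      obtain i j where "i \<in> W" "j \<in> W" "u = h i" "v = h j" using e himg by blast
      then show "e \<in> image h ` {{u, v} | u v. u \<in> W \<and> v \<in> W \<and> E0 u v}"
        using e unfolding E0_def by (intro image_eqI[of _ _ "{i,j}"]) auto
    qed
  next
    show "image h ` {{u, v} | u v. u \<in> W \<and> v \<in> W \<and> E0 u v} \<subseteq> {{u, v} | u v. u \<in> V \<and> v \<in> V \<and> E u v}"
      using himg unfolding E0_def by auto
  qed
  have "num_edges V E = num_edges W E0"
    unfolding num_edges_def ed
    by (rule card_image) (rule inj_on_subset[OF inj_on_image_Pow[OF hinj] edges_sub])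
  also have "\<dots> \<le> max_NAW n l"
    unfolding max_NAW_def
  proof (rule Max_ge)
    show "finite {num_edges {0..<n} E | E. simple_graph {0..<n} E \<and> N_AW {0..<n} E l}"
      by (rule finite_subset[of _ "{..2^n}"]) (use num_edges_le[of "{0..<n}"] in auto)
    show "num_edges W E0 \<in> {num_edges {0..<n} E | E. simple_graph {0..<n} E \<and> N_AW {0..<n} E l}"
      using sg0 naw0 unfolding W_def by blast
  qed
  finally show ?thesis .
qed



lemma parity_kernel:
  assumes sg: "simple_graph V E" and el: "even l" and l2: "l \<ge> 2"
    and TV: "T \<subseteq> V" and Tne: "T \<noteq> {}"
    and ev: "\<forall>w\<in>V. even (card (nh V E w \<inter> T) + card T)"
  shows "\<not> N_AW V E l"
proof -
  have fin: "finite V" using sg simple_graph_def by auto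
  have fT: "finite T" using finite_subset[OF TV fin] .
  define h where "h = int (l div 2)"
  define x where "x = (\<lambda>v. if v \<in> T then h else 0)"
  have ker: "\<forall>w\<in>V. int l dvd (\<Sum>v\<in>cn V E w. x v)"
  proof
    fix w assume w: "w \<in> V"
    have fc: "finite (cn V E w)" using fin unfolding cn_def by auto
    have s: "(\<Sum>v\<in>cn V E w. x v) = h * int (card (cn V E w \<inter> T))"
      unfolding x_def using fc by (simp add: sum.If_cases)
    have ct: "cn V E w \<inter> T = T - (nh V E w \<inter> T)" using cn_eq[OF sg w] TV by auto
    have c: "card (cn V E w \<inter> T) = card T - card (nh V E w \<inter> T)"
      unfolding ct by (rule card_Diff_subset) (use fT in auto)
    have le: "card (nh V E w \<inter> T) \<le> card T" by (rule card_mono[OF fT]) auto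
    have "even (card (cn V E w \<inter> T))" using ev w le unfolding c by auto
    then obtain m where m: "card (cn V E w \<inter> T) = 2 * m" by blast
    have "h * int (card (cn V E w \<inter> T)) = int l * int m" unfolding m h_def using el
      by (metis dvd_mult_div_cancel mult.assoc mult.commute of_nat_mult)
    then show "int l dvd (\<Sum>v\<in>cn V E w. x v)" unfolding s by simp
  qed
  obtain u0 where u0: "u0 \<in> T" using Tne by blast
  have nd: "\<not> int l dvd x u0"
  proof
    assume "int l dvd x u0"
    then have "int l dvd h" using u0 unfolding x_def by simp
    moreover have "0 < h" "h < int l" unfolding h_def using l2 by auto
    ultimately show False using zdvd_imp_le by fastforce
  qed
  show ?thesis by (rule kernel_not_NAW[OF sg ker _ nd]) (use u0 TV in auto)
qed

lemma H_nh: "compl_graph V E u w \<longleftrightarrow> w \<in> nh V E u"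
  unfolding nh_def compl_graph_def by auto

lemma comp_sub_V: "component V H v \<subseteq> V" unfolding component_def by auto

lemma comp_self: "v \<in> V \<Longrightarrow> v \<in> component V H v" unfolding component_def by auto

lemma comp_step: "u \<in> component V (compl_graph V E) v \<Longrightarrow> w \<in> nh V E u \<Longrightarrow> w \<in> component V (compl_graph V E) v"
  unfolding component_def using H_nh[of V E u w] nh_sub[of V E u]
  by (auto intro: rtranclp.rtrancl_into_rtrancl)

lemma comp_least:
  assumes cl: "\<forall>u\<in>X. nh V E u \<subseteq> X" and v: "v \<in> X"
  shows "component V (compl_graph V E) v \<subseteq> X"
proof
  fix u assume "u \<in> component V (compl_graph V E) v"
  then have r: "(compl_graph V E)\<^sup>*\<^sup>* v u" unfolding component_def by auto
  show "u \<in> X" using r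
  proof (induction rule: rtranclp_induct)
    case base then show ?case using v .
  next
    case (step y z) then show ?case using cl H_nh[of V E y z] by auto
  qed
qed

lemma H_sym: "simple_graph V E \<Longrightarrow> compl_graph V E u w \<Longrightarrow> compl_graph V E w u"
  unfolding compl_graph_def simple_graph_def by auto

lemma rt_sym:
  assumes sg: "simple_graph V E" and r: "(compl_graph V E)\<^sup>*\<^sup>* v u"
  shows "(compl_graph V E)\<^sup>*\<^sup>* u v"
  using r
proof (induction rule: rtranclp_induct)
  case base then show ?case by simp
next
  case (step y z)
  then show ?case using H_sym[OF sg step(2)] by (meson converse_rtranclp_into_rtranclp)
qed

lemma comp_eq:
  assumes sg: "simple_graph V E" and u: "u \<in> component V (compl_graph V E) v"
  shows "component V (compl_graph V E) u = component V (compl_graph V E) v"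
proof -
  have r: "(compl_graph V E)\<^sup>*\<^sup>* v u" using u unfolding component_def by auto
  have r': "(compl_graph V E)\<^sup>*\<^sup>* u v" by (rule rt_sym[OF sg r])
  show ?thesis unfolding component_def using r r' by (auto intro: rtranclp_trans)
qed

lemma comp_disj:
  assumes sg: "simple_graph V E" and "w \<in> V" and "w \<notin> component V (compl_graph V E) v"
  shows "component V (compl_graph V E) w \<inter> component V (compl_graph V E) v = {}"
proof (rule ccontr)
  assume "component V (compl_graph V E) w \<inter> component V (compl_graph V E) v \<noteq> {}"
  then obtain u where u1: "u \<in> component V (compl_graph V E) w" and u2: "u \<in> component V (compl_graph V E) v" by blast
  have "component V (compl_graph V E) w = component V (compl_graph V E) v"
    using comp_eq[OF sg u1] comp_eq[OF sg u2] by simp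
  then show False using assms comp_self[of w V] by auto
qed

lemma even_union:
  assumes sg: "simple_graph V E"
  shows "finite X \<Longrightarrow> X \<subseteq> V \<Longrightarrow> (\<forall>w\<in>X. component V (compl_graph V E) w \<subseteq> X) \<Longrightarrow>
    (\<forall>w\<in>X. even (card (component V (compl_graph V E) w))) \<Longrightarrow> even (card X)"
proof (induction X rule: finite_psubset_induct)
  case (psubset X)
  show ?case
  proof (cases "X = {}")
    case True then show ?thesis by simp
  next
    case False
    then obtain w where w: "w \<in> X" by blast
    define C where "C = component V (compl_graph V E) w"
    have CX: "C \<subseteq> X" using psubset.prems w unfolding C_def by auto
    have wC: "w \<in> C" unfolding C_def using comp_self[of w V] w psubset.prems by auto
    have lt: "X - C \<subset> X" using wC w by auto
    have cl: "\<forall>u\<in>X - C. component V (compl_graph V E) u \<subseteq> X - C"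
    proof
      fix u assume u: "u \<in> X - C"
      have "component V (compl_graph V E) u \<inter> C = {}" unfolding C_def
        by (rule comp_disj[OF sg]) (use u psubset.prems C_def in auto)
      then show "component V (compl_graph V E) u \<subseteq> X - C" using psubset.prems u by auto
    qed
    have e1: "even (card (X - C))"
      by (rule psubset.IH[OF lt]) (use psubset.prems cl in auto)
    have e2: "even (card C)" using psubset.prems w unfolding C_def by auto
    have "card X = card (X - C) + card C"
      using card_Diff_subset[OF finite_subset[OF CX psubset.hyps] CX] card_mono[OF psubset.hyps CX] by simp
    then show ?thesis using e1 e2 by simp
  qed
qed



lemma ext_contra:
  assumes ex: "extremal n l V E" and l: "l > 0"
    and pV: "p1 \<in> V" "p2 \<in> V" "p3 \<in> V" "p4 \<in> V" "p5 \<in> V"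
    and dist: "distinct [p1,p2,p3,p4,p5]"
    and h1: "nh V E p1 = {p2}" and h2: "nh V E p2 = {p1,p3}" and h3: "nh V E p3 = {p2,p4}"
    and h4: "nh V E p4 = {p3,p5}"
  shows False
proof -
  have sg: "simple_graph V E" and cV: "card V = n" and naw: "N_AW V E l" and mx: "num_edges V E = max_NAW n l"
    using ex unfolding extremal_def by auto
  define E' where "E' = (\<lambda>u v. E u v \<or> (u = p4 \<and> v = p5) \<or> (u = p5 \<and> v = p4))"
  have naw': "N_AW V E' l" unfolding E'_def by (rule config_NAW[OF sg l pV dist h1 h2 h3 h4 naw])
  have nE45: "\<not> E p4 p5" "\<not> E p5 p4" using h4 nh_sym[OF sg, of p4 p5]
    unfolding nh_def compl_graph_def by auto
  have sg': "simple_graph V E'" using sg pV dist unfolding simple_graph_def E'_def by auto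
  have fin: "finite V" using sg simple_graph_def by auto
  have eq: "{{u, v} | u v. u \<in> V \<and> v \<in> V \<and> E' u v} = insert {p4,p5} {{u, v} | u v. u \<in> V \<and> v \<in> V \<and> E u v}"
    unfolding E'_def using pV by (auto simp: insert_commute)
  have nin: "{p4,p5} \<notin> {{u, v} | u v. u \<in> V \<and> v \<in> V \<and> E u v}"
  proof
    assume "{p4,p5} \<in> {{u, v} | u v. u \<in> V \<and> v \<in> V \<and> E u v}"
    then obtain u v where "{p4,p5} = {u,v}" "E u v" by blast
    then have "(u = p4 \<and> v = p5) \<or> (u = p5 \<and> v = p4)" by (auto simp: doubleton_eq_iff)
    with \<open>E u v\<close> nE45 show False by auto
  qed
  have fe: "finite {{u, v} | u v. u \<in> V \<and> v \<in> V \<and> E u v}"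
    by (rule finite_subset[OF edges_sub]) (use fin in auto)
  have "num_edges V E' = num_edges V E + 1"
    unfolding num_edges_def eq using card_insert_disjoint[OF fe nin] by simp
  moreover have "num_edges V E' \<le> max_NAW n l" by (rule le_max_NAW[OF sg' cV naw'])
  ultimately show False using mx by simp
qed



lemma two_nb: "card S = 2 \<Longrightarrow> a \<in> S \<Longrightarrow> \<exists>b. S = {a,b} \<and> b \<noteq> a"
  by (auto simp: card_2_iff insert_commute)

lemma one_nb: "card S = 1 \<Longrightarrow> a \<in> S \<Longrightarrow> S = {a}"
  by (metis card_1_singletonE singletonD)

lemma lt2_cases: "(i::nat) < 2 \<Longrightarrow> i = 0 \<or> i = 1" by auto
lemma lt4_cases: "(i::nat) < 4 \<Longrightarrow> i = 0 \<or> i = 1 \<or> i = 2 \<or> i = 3" by auto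

lemma path_case:
  assumes sg: "simple_graph V E"
   and deg: "\<forall>w\<in>V. card (nh V E w) \<le> 2"
   and nk: "\<forall>T. T \<subseteq> V \<longrightarrow> T \<noteq> {} \<longrightarrow> \<not>(\<forall>w\<in>V. even (card (nh V E w \<inter> T) + card T))"
   and ncfg: "\<forall>p1 p2 p3 p4 p5. p1 \<in> V \<longrightarrow> p2 \<in> V \<longrightarrow> p3 \<in> V \<longrightarrow> p4 \<in> V \<longrightarrow> p5 \<in> V \<longrightarrow>
        distinct [p1,p2,p3,p4,p5] \<longrightarrow> nh V E p1 = {p2} \<longrightarrow> nh V E p2 = {p1,p3} \<longrightarrow>
        nh V E p3 = {p2,p4} \<longrightarrow> nh V E p4 = {p3,p5} \<longrightarrow> False"
   and p1: "p1 \<in> V" and h1: "nh V E p1 = {p2}"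
  shows "iso_path (compl_graph V E) (component V (compl_graph V E) p1) 2 \<or>
         iso_path (compl_graph V E) (component V (compl_graph V E) p1) 4"
proof -
  let ?C = "component V (compl_graph V E) p1"
  have fin: "finite V" using sg simple_graph_def by auto
  have fnh: "finite (nh V E u)" for u using finite_subset[OF nh_sub fin] .
  have irr: "u \<notin> nh V E u" for u unfolding nh_def compl_graph_def by auto
  have sym: "a \<in> nh V E b \<longleftrightarrow> b \<in> nh V E a" for a b using nh_sym[OF sg] .
  have inV: "a \<in> nh V E b \<Longrightarrow> a \<in> V" for a b using nh_sub[of V E b] by auto
  have cnt: "card (nh V E b) = 1 \<or> card (nh V E b) = 2" if "a \<in> nh V E b" "b \<in> V" for a b
  proof -
    have "card (nh V E b) > 0" using that fnh card_gt_0_iff by auto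
    then show ?thesis using deg that by force
  qed
  have p2: "p2 \<in> V" "p1 \<in> nh V E p2" "p1 \<noteq> p2" using h1 inV[of p2 p1] sym[of p1 p2] irr[of p1] by auto
  have c1: "p1 \<in> ?C" using comp_self[OF p1] .
  have c2: "p2 \<in> ?C" using comp_step[OF c1] h1 by auto
  show ?thesis
  proof (cases "card (nh V E p2) = 1")
    case True
    have h2: "nh V E p2 = {p1}" by (rule one_nb[OF True p2(2)])
    have C: "?C = {p1,p2}"
    proof
      show "?C \<subseteq> {p1,p2}" by (rule comp_least) (use h1 h2 in auto)
      show "{p1,p2} \<subseteq> ?C" using c1 c2 by auto
    qed
    have "iso_path (compl_graph V E) ?C 2"
      unfolding iso_path_def C
    proof (intro exI conjI)
      show "bij_betw ((!) [p1,p2]) {0..<2} {p1,p2}" by (rule bij_betw_nth) (use p2 in auto)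
      show "\<forall>i<2. \<forall>j<2. compl_graph V E ([p1,p2] ! i) ([p1,p2] ! j) = (i + 1 = j \<or> j + 1 = i)"
        unfolding H_nh using h1 h2 p2 by (auto dest!: lt2_cases)
    qed
    then show ?thesis by simp
  next
    case False
    have ccp2: "card (nh V E p2) = 2" using cnt[OF p2(2) p2(1)] False by simp
    obtain p3 where h2: "nh V E p2 = {p1,p3}" and p31: "p3 \<noteq> p1" using two_nb[OF ccp2 p2(2)] by blast
    have p3: "p3 \<in> V" "p2 \<in> nh V E p3" "p2 \<noteq> p3" using h2 inV[of p3 p2] sym[of p2 p3] irr[of p2] by auto
    have c3: "p3 \<in> ?C" using comp_step[OF c2] h2 by auto
    show ?thesis
    proof (cases "card (nh V E p3) = 1")
      case True
      have h3: "nh V E p3 = {p2}" by (rule one_nb[OF True p3(2)])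
      have "\<forall>w\<in>V. even (card (nh V E w \<inter> {p1,p3}) + card {p1,p3})"
      proof
        fix w assume w: "w \<in> V"
        show "even (card (nh V E w \<inter> {p1,p3}) + card {p1,p3})"
        proof (cases "w = p2")
          case True then show ?thesis using h2 p31 by (simp add: Int_absorb1)
        next
          case False
          then have "nh V E w \<inter> {p1,p3} = {}" using sym h1 h3 by auto
          then show ?thesis using p31 by simp
        qed
      qed
      moreover have "{p1,p3} \<subseteq> V" using p1 p3 by auto
      ultimately have False using nk by blast
      then show ?thesis ..
    next
      case False
      have ccp3: "card (nh V E p3) = 2" using cnt[OF p3(2) p3(1)] False by simp
      obtain p4 where h3: "nh V E p3 = {p2,p4}" and p42: "p4 \<noteq> p2" using two_nb[OF ccp3 p3(2)] by blast
      have p4: "p4 \<in> V" "p3 \<in> nh V E p4" "p3 \<noteq> p4" using h3 inV[of p4 p3] sym[of p3 p4] irr[of p3] by auto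
      have p41: "p4 \<noteq> p1" using h1 h3 sym[of p1 p3] p3 by auto
      have c4: "p4 \<in> ?C" using comp_step[OF c3] h3 by auto
      show ?thesis
      proof (cases "card (nh V E p4) = 1")
        case True
        have h4: "nh V E p4 = {p3}" by (rule one_nb[OF True p4(2)])
        have C: "?C = {p1,p2,p3,p4}"
        proof
          show "?C \<subseteq> {p1,p2,p3,p4}" by (rule comp_least) (use h1 h2 h3 h4 in auto)
          show "{p1,p2,p3,p4} \<subseteq> ?C" using c1 c2 c3 c4 by auto
        qed
        have "iso_path (compl_graph V E) ?C 4"
          unfolding iso_path_def C
        proof (intro exI conjI)
          show "bij_betw ((!) [p1,p2,p3,p4]) {0..<4} {p1,p2,p3,p4}"
            by (rule bij_betw_nth) (use p2 p3 p4 p31 p41 p42 in auto)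
          show "\<forall>i<4. \<forall>j<4. compl_graph V E ([p1,p2,p3,p4] ! i) ([p1,p2,p3,p4] ! j) = (i + 1 = j \<or> j + 1 = i)"
            unfolding H_nh using h1 h2 h3 h4 p2 p3 p4 p31 p41 p42 by (auto dest!: lt4_cases)
        qed
        then show ?thesis by simp
      next
        case False
        have ccp4: "card (nh V E p4) = 2" using cnt[OF p4(2) p4(1)] False by simp
        obtain p5 where h4: "nh V E p4 = {p3,p5}" and p53: "p5 \<noteq> p3" using two_nb[OF ccp4 p4(2)] by blast
        have p5: "p5 \<in> V" "p4 \<noteq> p5" using h4 inV[of p5 p4] irr[of p4] by auto
        have p51: "p5 \<noteq> p1" using h1 h4 sym[of p5 p4] p42 by auto
        have p52: "p5 \<noteq> p2" using h2 h4 sym[of p5 p4] p41 p4 by auto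
        have "distinct [p1,p2,p3,p4,p5]" using p2 p3 p4 p5 p31 p41 p42 p51 p52 p53 by auto
        then have False using ncfg p1 p2 p3 p4 p5 h1 h2 h3 h4 by blast
        then show ?thesis ..
      qed
    qed
  qed
qed



lemma iso_card: "iso_path G S k \<Longrightarrow> card S = k"
  unfolding iso_path_def by (metis bij_betw_same_card card_atLeastLessThan diff_zero)

lemma classify:
  assumes sg: "simple_graph V E"
   and deg: "\<forall>w\<in>V. card (nh V E w) \<le> 2"
   and nk: "\<forall>T. T \<subseteq> V \<longrightarrow> T \<noteq> {} \<longrightarrow> \<not>(\<forall>w\<in>V. even (card (nh V E w \<inter> T) + card T))"
   and ncfg: "\<forall>p1 p2 p3 p4 p5. p1 \<in> V \<longrightarrow> p2 \<in> V \<longrightarrow> p3 \<in> V \<longrightarrow> p4 \<in> V \<longrightarrow> p5 \<in> V \<longrightarrow>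
        distinct [p1,p2,p3,p4,p5] \<longrightarrow> nh V E p1 = {p2} \<longrightarrow> nh V E p2 = {p1,p3} \<longrightarrow>
        nh V E p3 = {p2,p4} \<longrightarrow> nh V E p4 = {p3,p5} \<longrightarrow> False"
   and v: "v \<in> V"
  shows "iso_path (compl_graph V E) (component V (compl_graph V E) v) 2 \<or>
         iso_path (compl_graph V E) (component V (compl_graph V E) v) 4 \<or>
         (odd (card (component V (compl_graph V E) v)) \<and>
          (\<exists>T\<subseteq>component V (compl_graph V E) v. odd (card T) \<and> (\<forall>w\<in>V. even (card (nh V E w \<inter> T)))))"
proof -
  define C where "C = component V (compl_graph V E) v"
  have fin: "finite V" using sg simple_graph_def by auto
  have CV: "C \<subseteq> V" unfolding C_def by (rule comp_sub_V)
  have fC: "finite C" using finite_subset[OF CV fin] .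
  have vC: "v \<in> C" unfolding C_def by (rule comp_self[OF v])
  have fnh: "finite (nh V E u)" for u using finite_subset[OF nh_sub fin] .
  have sym: "a \<in> nh V E b \<longleftrightarrow> b \<in> nh V E a" for a b using nh_sym[OF sg] .
  consider (z) "\<exists>u\<in>C. card (nh V E u) = 0" | (o) "\<exists>u\<in>C. card (nh V E u) = 1" | (t) "\<forall>u\<in>C. card (nh V E u) = 2"
  proof -
    assume a0: "\<exists>u\<in>C. card (nh V E u) = 0 \<Longrightarrow> thesis" and a1: "\<exists>u\<in>C. card (nh V E u) = 1 \<Longrightarrow> thesis"
      and a2: "\<forall>u\<in>C. card (nh V E u) = 2 \<Longrightarrow> thesis"
    show thesis
    proof (cases "\<exists>u\<in>C. card (nh V E u) = 0 \<or> card (nh V E u) = 1")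
      case True then show thesis using a0 a1 by blast
    next
      case False
      have "\<forall>u\<in>C. card (nh V E u) = 2"
      proof
        fix u assume u: "u \<in> C"
        have "u \<in> V" using u CV by blast
        then have "card (nh V E u) \<le> 2" using deg by blast
        moreover have "card (nh V E u) \<noteq> 0" "card (nh V E u) \<noteq> 1" using False u by auto
        ultimately show "card (nh V E u) = 2" by linarith
      qed
      then show thesis by (rule a2)
    qed
  qed
  then show ?thesis
  proof cases
    case z
    then obtain u where u: "u \<in> C" and c0: "card (nh V E u) = 0" by blast
    have e: "nh V E u = {}" using c0 fnh by simp
    have uV: "u \<in> V" using u CV by auto
    have Cu: "C = component V (compl_graph V E) u" unfolding C_def using comp_eq[OF sg u[unfolded C_def]] by simp
    have CC: "C = {u}"
    proof
      show "C \<subseteq> {u}" unfolding Cu by (rule comp_least) (use e in auto)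
      show "{u} \<subseteq> C" using u by auto
    qed
    have "\<forall>w\<in>V. even (card (nh V E w \<inter> {u}))"
    proof
      fix w assume "w \<in> V"
      have "nh V E w \<inter> {u} = {}" using e sym[of u w] by auto
      then show "even (card (nh V E w \<inter> {u}))" by simp
    qed
    then show ?thesis unfolding C_def[symmetric] CC by auto
  next
    case o
    then obtain u where u: "u \<in> C" and c1: "card (nh V E u) = 1" by blast
    obtain p2 where h1: "nh V E u = {p2}" using c1 by (rule card_1_singletonE)
    have uV: "u \<in> V" using u CV by auto
    have Cu: "C = component V (compl_graph V E) u" unfolding C_def using comp_eq[OF sg u[unfolded C_def]] by simp
    show ?thesis unfolding C_def[symmetric] Cu using path_case[OF sg deg nk ncfg uV h1] by blast
  next
    case t
    have ev: "\<forall>w\<in>V. even (card (nh V E w \<inter> C))"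
    proof
      fix w assume w: "w \<in> V"
      show "even (card (nh V E w \<inter> C))"
      proof (cases "w \<in> C")
        case True
        have "nh V E w \<subseteq> C" using comp_step[of _ V E v] True unfolding C_def by blast
        then have "nh V E w \<inter> C = nh V E w" by blast
        then show ?thesis using t True by simp
      next
        case False
        have "nh V E w \<inter> C = {}"
        proof (rule ccontr)
          assume "nh V E w \<inter> C \<noteq> {}"
          then obtain u where "u \<in> nh V E w" "u \<in> C" by blast
          then have "w \<in> C" using comp_step[of u V E v w] sym[of u w] unfolding C_def by blast
          with False show False by blast
        qed
        then show ?thesis by simp
      qed
    qed
    have "odd (card C)"
    proof
      assume "even (card C)"
      then have "\<forall>w\<in>V. even (card (nh V E w \<inter> C) + card C)" using ev by simp
      moreover have "C \<noteq> {}" using vC by blast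
      ultimately show False using nk CV by blast
    qed
    then show ?thesis using ev unfolding C_def[symmetric] by blast
  qed
qed

theorem theorem4p9:
  fixes V :: "'a set" and E :: "'a \<Rightarrow> 'a \<Rightarrow> bool" and n l :: nat
  assumes "l \<ge> 2" and "even l" and "even n"
    and "extremal n l V E"
    and "\<forall>v \<in> V. degree V (compl_graph V E) v \<le> 2"
  shows "\<forall>v \<in> V. iso_path (compl_graph V E) (component V (compl_graph V E) v) 2 \<or>
                  iso_path (compl_graph V E) (component V (compl_graph V E) v) 4"
proof
  fix v assume v: "v \<in> V"
  have sg: "simple_graph V E" and cV: "card V = n" and naw: "N_AW V E l"
    using assms(4) unfolding extremal_def by auto
  have fin: "finite V" using sg simple_graph_def by auto
  have deg: "\<forall>w\<in>V. card (nh V E w) \<le> 2" using assms(5) unfolding degree_def nh_def by simp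
  have nk: "\<forall>T. T \<subseteq> V \<longrightarrow> T \<noteq> {} \<longrightarrow> \<not>(\<forall>w\<in>V. even (card (nh V E w \<inter> T) + card T))"
    using parity_kernel[OF sg assms(2) assms(1)] naw by blast
  have ncfg: "\<forall>p1 p2 p3 p4 p5. p1 \<in> V \<longrightarrow> p2 \<in> V \<longrightarrow> p3 \<in> V \<longrightarrow> p4 \<in> V \<longrightarrow> p5 \<in> V \<longrightarrow>
        distinct [p1,p2,p3,p4,p5] \<longrightarrow> nh V E p1 = {p2} \<longrightarrow> nh V E p2 = {p1,p3} \<longrightarrow>
        nh V E p3 = {p2,p4} \<longrightarrow> nh V E p4 = {p3,p5} \<longrightarrow> False"
  proof (intro allI impI)
    fix p1 p2 p3 p4 p5
    assume "p1 \<in> V" "p2 \<in> V" "p3 \<in> V" "p4 \<in> V" "p5 \<in> V" "distinct [p1,p2,p3,p4,p5]"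
      "nh V E p1 = {p2}" "nh V E p2 = {p1,p3}" "nh V E p3 = {p2,p4}" "nh V E p4 = {p3,p5}"
    then show False using ext_contra[OF assms(4)] assms(1) by simp
  qed
  let ?C = "\<lambda>w. component V (compl_graph V E) w"
  show "iso_path (compl_graph V E) (?C v) 2 \<or> iso_path (compl_graph V E) (?C v) 4"
  proof (rule ccontr)
    assume nv: "\<not> (iso_path (compl_graph V E) (?C v) 2 \<or> iso_path (compl_graph V E) (?C v) 4)"
    then obtain T0 where oC0: "odd (card (?C v))" and T0C: "T0 \<subseteq> ?C v" and oT0: "odd (card T0)"
      and eT0: "\<forall>w\<in>V. even (card (nh V E w \<inter> T0))"
      using classify[OF sg deg nk ncfg v] by blast
    have C0V: "?C v \<subseteq> V" by (rule comp_sub_V)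
    have "\<exists>w\<in>V - ?C v. odd (card (?C w))"
    proof (rule ccontr)
      assume "\<not> (\<exists>w\<in>V - ?C v. odd (card (?C w)))"
      then have allev: "\<forall>w\<in>V - ?C v. even (card (?C w))" by blast
      have cl: "\<forall>w\<in>V - ?C v. ?C w \<subseteq> V - ?C v"
      proof
        fix w assume w: "w \<in> V - ?C v"
        have "?C w \<inter> ?C v = {}" by (rule comp_disj[OF sg]) (use w in auto)
        then show "?C w \<subseteq> V - ?C v" using comp_sub_V[of V _ w] by blast
      qed
      have "even (card (V - ?C v))" by (rule even_union[OF sg]) (use fin allev cl in auto)
      moreover have "card (V - ?C v) = n - card (?C v)" using card_Diff_subset[OF finite_subset[OF C0V fin] C0V] cV by simp
      moreover have "card (?C v) \<le> n" using card_mono[OF fin C0V] cV by simp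
      ultimately show False using oC0 assms(3) by (metis even_diff_nat odd_add le_add_diff_inverse)
    qed
    then obtain w where w: "w \<in> V" "w \<notin> ?C v" and oC1: "odd (card (?C w))" by blast
    have n24: "\<not> (iso_path (compl_graph V E) (?C w) 2 \<or> iso_path (compl_graph V E) (?C w) 4)"
    proof
      assume "iso_path (compl_graph V E) (?C w) 2 \<or> iso_path (compl_graph V E) (?C w) 4"
      then have "card (?C w) = 2 \<or> card (?C w) = 4" using iso_card by metis
      then show False using oC1 by auto
    qed
    obtain T1 where T1C: "T1 \<subseteq> ?C w" and oT1: "odd (card T1)"
      and eT1: "\<forall>u\<in>V. even (card (nh V E u \<inter> T1))"
      using classify[OF sg deg nk ncfg w(1)] n24 by blast
    have disj: "T0 \<inter> T1 = {}" using comp_disj[OF sg w(1) w(2)] T0C T1C by blast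
    have C1V: "?C w \<subseteq> V" by (rule comp_sub_V)
    have fT0: "finite T0" using finite_subset[OF T0C finite_subset[OF C0V fin]] .
    have fT1: "finite T1" using finite_subset[OF T1C finite_subset[OF C1V fin]] .
    define T where "T = T0 \<union> T1"
    have TV: "T \<subseteq> V" unfolding T_def using T0C T1C C0V C1V by blast
    have Tne: "T \<noteq> {}" unfolding T_def using oT0 by auto
    have cT: "card T = card T0 + card T1" unfolding T_def by (rule card_Un_disjoint[OF fT0 fT1 disj])
    have "\<forall>u\<in>V. even (card (nh V E u \<inter> T) + card T)"
    proof
      fix u assume u: "u \<in> V"
      have "nh V E u \<inter> T = (nh V E u \<inter> T0) \<union> (nh V E u \<inter> T1)" unfolding T_def by blast
      then have "card (nh V E u \<inter> T) = card (nh V E u \<inter> T0) + card (nh V E u \<inter> T1)"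
        using card_Un_disjoint[of "nh V E u \<inter> T0" "nh V E u \<inter> T1"] fT0 fT1 disj by auto
      then show "even (card (nh V E u \<inter> T) + card T)" using eT0 eT1 u cT oT0 oT1 by simp
    qed
    then show False using nk TV Tne by blast
  qed
qed

end
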